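(* For each dimension $d$ there is a constant $\epsilon_d>0$ such that the following holds: if $f$ is a proper log-concave function on $\mathbb{R}^d$ with $\hbar$ as its John function, then $\|f\|_\infty\le e^d-\epsilon_d$.
   Context: A function $\mathbb{R}^d\to[0,\infty)$ is proper log-concave if it is upper semi-continuous, log-concave, with finite positive integral. The height function is $\hbar(x)=\sqrt{1-|x|^2}$ for $|x|\le1$ and $0$ otherwise. Positions of $\hbar$ are functions $\beta\,\hbar(Ax+a)$ with $A$ non-singular, $\beta>0$, $a\in\mathbb{R}^d$; "$\hbar$ is the John function of $f$" means $\hbar\le f$ pointwise and $\int g\le\int\hbar$ for every position $g$ of $\hbar$ with $g\le f$. $\|\cdot\|_\infty$ is the supremum norm. *)

theory Defs
  imports "HOL-Analysis.Analysis"
begin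

definition usc :: "('a::topological_space \<Rightarrow> real) \<Rightarrow> bool" where
  "usc f \<longleftrightarrow> (\<forall>t. open {x. f x < t})"

text \<open>Log-concavity of a nonnegative function (with the convention log 0 = -infinity).\<close>
definition log_concave :: "('a::real_vector \<Rightarrow> real) \<Rightarrow> bool" where
  "log_concave f \<longleftrightarrow>
     (\<forall>x y. \<forall>l\<in>{0<..<1::real}.
        f x powr (1 - l) * f y powr l \<le> f ((1 - l) *\<^sub>R x + l *\<^sub>R y))"

definition proper_log_concave :: "('a::euclidean_space \<Rightarrow> real) \<Rightarrow> bool" where
  "proper_log_concave f \<longleftrightarrow>
     (\<forall>x. 0 \<le> f x) \<and> usc f \<and> log_concave f \<and>
     f integrable_on UNIV \<and> 0 < integral UNIV f"

definition hbar :: "'a::euclidean_space \<Rightarrow> real" where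
  "hbar x = (if norm x \<le> 1 then sqrt (1 - (norm x)\<^sup>2) else 0)"

definition is_position_of_hbar :: "(real^'n \<Rightarrow> real) \<Rightarrow> bool" where
  "is_position_of_hbar g \<longleftrightarrow>
     (\<exists>(A::real^'n^'n) (\<beta>::real) (a::real^'n).
        invertible A \<and> 0 < \<beta> \<and> g = (\<lambda>x. \<beta> * hbar (A *v x + a)))"

definition hbar_is_John_function :: "(real^'n \<Rightarrow> real) \<Rightarrow> bool" where
  "hbar_is_John_function f \<longleftrightarrow>
     (\<forall>x. hbar x \<le> f x) \<and>
     (\<forall>g. is_position_of_hbar g \<and> (\<forall>x. g x \<le> f x) \<longrightarrow>
          integral UNIV g \<le> integral UNIV (hbar :: real^'n \<Rightarrow> real))"

end

theory Submission
  imports Defs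
begin


lemma hbar_alt: "hbar x = sqrt (max 0 (1 - (norm x)^2))"
proof (cases "norm x \<le> 1")
  case True
  then have "(norm x)^2 \<le> 1" by (simp add: power_le_one)
  then show ?thesis using True by (simp add: hbar_def)
next
  case False
  then have "(norm x)^2 > 1" by (simp add: one_less_power)
  then show ?thesis using False by (simp add: hbar_def)
qed

lemma hbar_nonneg: "0 \<le> hbar x" by (simp add: hbar_alt)

lemma hbar_le1: "hbar x \<le> 1" by (simp add: hbar_alt)

lemma hbar_zero: "1 \<le> norm x \<Longrightarrow> hbar x = 0"
  by (cases "norm x = 1") (auto simp: hbar_def)

lemma hbar_ge: "norm x \<le> 1 \<Longrightarrow> 1 - (norm x)^2 \<le> hbar x"
proof -
  assume a: "norm x \<le> 1"
  then have t: "0 \<le> 1 - (norm x)^2" "1 - (norm x)^2 \<le> 1" by (auto simp: power_le_one)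
  define t where "t = 1 - (norm x)^2"
  have "t^2 \<le> t" using t unfolding t_def by (simp add: power2_eq_square mult_left_le)
  hence "sqrt (t^2) \<le> sqrt t" by (rule real_sqrt_le_mono)
  hence "1 - (norm x)^2 \<le> sqrt (1 - (norm x)^2)" using t unfolding t_def by simp
  then show ?thesis using a by (simp add: hbar_def)
qed

lemma continuous_hbar: "continuous_on UNIV (hbar::'a::euclidean_space \<Rightarrow> real)"
proof -
  have e: "hbar = (\<lambda>x::'a. sqrt (max 0 (1 - (norm x)^2)))"
    by (rule ext, rule hbar_alt)
  have "continuous_on UNIV (\<lambda>x::'a. max 0 (1 - (norm x)^2))"
    by (intro continuous_on_max continuous_on_const continuous_on_diff continuous_on_power continuous_on_norm continuous_on_id)
  then have "continuous_on UNIV (\<lambda>x::'a. sqrt (max 0 (1 - (norm x)^2)))"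
    by (rule continuous_on_real_sqrt)
  then show ?thesis by (simp only: e)
qed

lemma indicator_box_integral:
  fixes a b :: "'a::euclidean_space"
  shows "((\<lambda>x. if x \<in> cbox a b then (c::real) else 0) has_integral c * Henstock_Kurzweil_Integration.content (cbox a b)) UNIV"
  by (subst has_integral_restrict_UNIV) (metis has_integral_const mult.commute real_scaleR_def)

lemma supp_integrable:
  fixes g :: "'a::euclidean_space \<Rightarrow> real"
  assumes "continuous_on UNIV g" "\<And>x. x \<notin> cbox a b \<Longrightarrow> g x = 0"
  shows "g integrable_on UNIV"
proof -
  have "g integrable_on cbox a b"
    by (rule integrable_continuous[OF continuous_on_subset[OF assms(1) subset_UNIV]])
  then show ?thesis by (rule integrable_on_superset) (use assms(2) in auto)
qed

lemma hbar_integrable: "(hbar :: 'a::euclidean_space \<Rightarrow> real) integrable_on UNIV"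
proof (rule supp_integrable[OF continuous_hbar, of "-One" One])
  fix x :: 'a assume "x \<notin> cbox (- One) One"
  then obtain i where i: "i \<in> Basis" "\<not> (-1 \<le> x \<bullet> i \<and> x \<bullet> i \<le> 1)"
    by (auto simp: mem_box inner_minus_left)
  then have "1 \<le> \<bar>x \<bullet> i\<bar>" by auto
  also have "\<dots> \<le> norm x" using i(1) Basis_le_norm by blast
  finally show "hbar x = 0" by (rule hbar_zero)
qed



lemma hbar_out:
  fixes x :: "real^'n"
  assumes "x \<notin> cbox (- vec 1) (vec 1)" shows "hbar x = 0"
proof -
  from assms obtain i where "\<not> (-1 \<le> x $ i \<and> x $ i \<le> 1)"
    by (auto simp: mem_box_cart)
  then have "1 \<le> \<bar>x $ i\<bar>" by auto
  also have "\<dots> \<le> norm x" by (rule component_le_norm_cart)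
  finally show ?thesis by (rule hbar_zero)
qed

lemma hbar_has_integral_box:
  "((hbar :: real^'n \<Rightarrow> real) has_integral integral UNIV (hbar::real^'n\<Rightarrow>real)) (cbox (- vec 1) (vec 1))"
proof -
  have "((hbar::real^'n\<Rightarrow>real) has_integral integral UNIV (hbar::real^'n\<Rightarrow>real)) UNIV"
    by (rule integrable_integral[OF hbar_integrable])
  then have "((\<lambda>x::real^'n. if x \<in> cbox (- vec 1) (vec 1) then hbar x else 0) has_integral integral UNIV (hbar::real^'n\<Rightarrow>real)) UNIV"
    by (rule has_integral_eq[rotated]) (simp add: hbar_out)
  then show ?thesis by (simp only: has_integral_restrict_UNIV)
qed

lemma hbar_int_le: "integral UNIV (hbar::real^'n\<Rightarrow>real) \<le> 2 ^ CARD('n)"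
proof -
  let ?B = "cbox (- vec 1) (vec 1 :: real^'n)"
  have "0 \<in> ?B" by (simp add: mem_box_cart)
  then have ne: "?B \<noteq> {}" by blast
  have c: "Henstock_Kurzweil_Integration.content ?B = 2 ^ CARD('n)"
    using content_cbox_cart[OF ne] by simp
  have I: "((\<lambda>x. if x \<in> ?B then (1::real) else 0) has_integral 2 ^ CARD('n)) UNIV"
    using indicator_box_integral[of "- vec 1" "vec 1 :: real^'n" 1] c by simp
  have "integral UNIV (hbar::real^'n\<Rightarrow>real) \<le> integral UNIV (\<lambda>x. if x \<in> ?B then (1::real) else 0)"
  proof (rule integral_le[OF hbar_integrable])
    show "(\<lambda>x. if x \<in> ?B then (1::real) else 0) integrable_on UNIV" using I by blast
    show "hbar x \<le> (if x \<in> ?B then 1 else 0)" for x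
      using hbar_le1[of x] hbar_out[of x] by simp
  qed
  then show ?thesis using I by (simp add: integral_unique)
qed

lemma hbar_int_pos: "0 < integral UNIV (hbar::real^'n\<Rightarrow>real)"
proof -
  define h :: real where "h = 1 / (2 * CARD('n))"
  have hpos: "0 < h" by (simp add: h_def)
  let ?B = "cbox (- vec h) (vec h :: real^'n)"
  have "0 \<in> ?B" using hpos by (simp add: mem_box_cart)
  then have ne: "?B \<noteq> {}" by blast
  have c: "Henstock_Kurzweil_Integration.content ?B = (2*h) ^ CARD('n)"
    using content_cbox_cart[OF ne] by simp
  have I: "((\<lambda>x. if x \<in> ?B then (1/2::real) else 0) has_integral (1/2) * (2*h) ^ CARD('n)) UNIV"
    using indicator_box_integral[of "- vec h" "vec h :: real^'n" "1/2"] c by simp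
  have le: "(if x \<in> ?B then (1/2::real) else 0) \<le> hbar x" for x
  proof (cases "x \<in> ?B")
    case True
    then have "\<bar>x $ i\<bar> \<le> h" for i unfolding mem_box_cart by (simp add: abs_le_iff) (metis minus_le_iff)
    then have "(\<Sum>i\<in>UNIV. \<bar>x $ i\<bar>) \<le> (\<Sum>i\<in>(UNIV::'n set). h)" by (intro sum_mono) auto
    also have "\<dots> = 1/2" by (simp add: h_def)
    finally have n: "norm x \<le> 1/2" using norm_le_l1_cart[of x] by linarith
    have "norm x * norm x \<le> (1/2)*(1/2)" using n by (intro mult_mono) auto
    then have "1/2 \<le> 1 - (norm x)^2" by (simp add: power2_eq_square)
    also have "\<dots> \<le> hbar x" using n by (intro hbar_ge) auto
    finally show ?thesis using True by simp
  qed (simp add: hbar_nonneg)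
  have "(1/2) * (2*h) ^ CARD('n) \<le> integral UNIV (hbar::real^'n\<Rightarrow>real)"
  proof -
    have "integral UNIV (\<lambda>x::real^'n. if x \<in> ?B then (1/2::real) else 0) \<le> integral UNIV (hbar::real^'n\<Rightarrow>real)"
      by (rule integral_le[OF _ hbar_integrable]) (use I le in blast)+
    then show ?thesis using integral_unique[OF I] by simp
  qed
  moreover have "0 < (1/2) * (2*h) ^ CARD('n)" using hpos by simp
  ultimately show ?thesis by linarith
qed

lemma comp_divR: "((x::real^'n) /\<^sub>R m) $ i = x$i / m"
  by (simp add: divide_inverse_commute)

lemma hbar_affine_integral:
  fixes a :: "real^'n" and m :: real
  assumes m: "0 < m"
  shows "((\<lambda>z. hbar (m *\<^sub>R z + a)) has_integral integral UNIV (hbar::real^'n\<Rightarrow>real) / m ^ CARD('n)) UNIV"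
proof -
  have "((\<lambda>z. hbar (m *\<^sub>R z + a)) has_integral (integral UNIV (hbar::real^'n\<Rightarrow>real) /\<^sub>R m ^ DIM(real^'n)))
           (cbox ((- vec 1 - a) /\<^sub>R m) ((vec 1 - a) /\<^sub>R m))"
    by (rule has_integral_affinity'[OF hbar_has_integral_box m])
  then have A: "((\<lambda>z. hbar (m *\<^sub>R z + a)) has_integral integral UNIV (hbar::real^'n\<Rightarrow>real) / m ^ CARD('n))
           (cbox ((- vec 1 - a) /\<^sub>R m) ((vec 1 - a) /\<^sub>R m))"
    by (simp add: field_simps)
  show ?thesis
  proof (rule has_integral_on_superset[OF A _ subset_UNIV])
    fix z assume z: "z \<notin> cbox ((- vec 1 - a) /\<^sub>R m) ((vec 1 - a) /\<^sub>R m)"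
    have "m *\<^sub>R z + a \<notin> cbox (- vec 1) (vec 1)"
    proof
      assume "m *\<^sub>R z + a \<in> cbox (- vec 1) (vec 1)"
      then have "-1 \<le> m * z$i + a$i \<and> m * z$i + a$i \<le> 1" for i
        by (auto simp: mem_box_cart)
      then have b: "(-1 - a$i) / m \<le> z$i \<and> z$i \<le> (1 - a$i) / m" for i
        using m by (auto simp: field_simps)
      have "z \<in> cbox ((- vec 1 - a) /\<^sub>R m) ((vec 1 - a) /\<^sub>R m)"
        unfolding mem_box_cart comp_divR using b by simp
      with z show False by blast
    qed
    then show "hbar (m *\<^sub>R z + a) = 0" by (rule hbar_out)
  qed
qed



lemma lc_hull:
  fixes f :: "real^'n \<Rightarrow> real"
  assumes lc: "log_concave f" and hb: "\<And>x. hbar x \<le> f x" and fx0: "M \<le> f x0"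
    and M: "0 < M" and l: "0 < t" "t < 1"
  shows "hbar y powr (1-t) * M powr t \<le> f ((1-t) *\<^sub>R y + t *\<^sub>R x0)"
proof -
  have a: "hbar y powr (1-t) \<le> f y powr (1-t)"
    by (rule powr_mono2) (use l hbar_nonneg hb in auto)
  have b: "M powr t \<le> f x0 powr t"
    by (rule powr_mono2) (use l M fx0 in auto)
  have "hbar y powr (1-t) * M powr t \<le> f y powr (1-t) * f x0 powr t"
    by (rule mult_mono[OF a b]) auto
  also have "\<dots> \<le> f ((1-t) *\<^sub>R y + t *\<^sub>R x0)"
    using lc l unfolding log_concave_def by auto
  finally show ?thesis .
qed

lemma invertible_from_vec:
  fixes A B :: "real^'n^'n"
  assumes "\<And>x. A *v (B *v x) = x" "\<And>x. B *v (A *v x) = x"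
  shows "invertible A"
  unfolding invertible_def
proof (intro exI conjI)
  show "A ** B = mat 1" unfolding matrix_eq
    using assms(1) by (simp add: matrix_vector_mul_assoc[symmetric])
  show "B ** A = mat 1" unfolding matrix_eq
    using assms(2) by (simp add: matrix_vector_mul_assoc[symmetric])
qed

definition rk1 :: "real \<Rightarrow> real \<Rightarrow> real^'n \<Rightarrow> real^'n^'n" where
  "rk1 s k u = (\<chi> i j. s * (if i = j then 1 else 0) + k * u$i * u$j)"

lemma rk1_mv: "rk1 s k u *v z = s *\<^sub>R z + (k * (u \<bullet> z)) *\<^sub>R u"
proof -
  have "(\<Sum>j\<in>UNIV. (s * (if i = j then 1 else 0) + k * u$i * u$j) * z$j)
      = (\<Sum>j\<in>UNIV. (if i = j then s * z$j else 0)) + (k * u$i) * (\<Sum>j\<in>UNIV. u$j * z$j)" for i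
    by (subst sum_distrib_left, subst sum.distrib[symmetric], rule sum.cong) (auto simp: algebra_simps)
  then show ?thesis
    by (simp add: rk1_def vec_eq_iff matrix_vector_mult_def inner_vec_def)
qed

lemma rk1_inv:
  fixes u :: "real^'n"
  assumes u: "u \<bullet> u = 1" and s: "s \<noteq> 0" and sk: "s + k \<noteq> 0"
  shows "invertible (rk1 s k u)"
proof (rule invertible_from_vec)
  define c where "c = - k / (s * (s+k))"
  have c0: "(s + k) * c = - k / s" using s sk by (simp add: c_def)
  have cz: "s*c + k/s + k*c = 0"
  proof -
    have "s*c + k/s + k*c = (s + k) * c + k/s" by (simp add: algebra_simps)
    then show ?thesis using c0 by simp
  qed
  fix x
  show "rk1 s k u *v (rk1 (1/s) c u *v x) = x"
  proof -
    have "rk1 s k u *v (rk1 (1/s) c u *v x) = x + ((s*c + k/s + k*c) * (u \<bullet> x)) *\<^sub>R u"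
      using s by (simp add: rk1_mv inner_add_right u algebra_simps)
    also note cz
    finally show ?thesis by simp
  qed
  show "rk1 (1/s) c u *v (rk1 s k u *v x) = x"
  proof -
    have "rk1 (1/s) c u *v (rk1 s k u *v x) = x + ((s*c + k/s + k*c) * (u \<bullet> x)) *\<^sub>R u"
      using s by (simp add: rk1_mv inner_add_right u algebra_simps)
    also note cz
    finally show ?thesis by simp
  qed
qed

lemma position_rk1:
  fixes u a :: "real^'n"
  assumes u: "u \<bullet> u = 1" and s: "s \<noteq> 0" and sk: "s + k \<noteq> 0" and b: "0 < \<beta>"
  shows "is_position_of_hbar (\<lambda>z. \<beta> * hbar (s *\<^sub>R z + (k * (u \<bullet> z)) *\<^sub>R u + a))"
  unfolding is_position_of_hbar_def
  by (rule exI[of _ "rk1 s k u"], rule exI[of _ \<beta>], rule exI[of _ a])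
     (simp add: rk1_inv[OF u s sk] b rk1_mv)

lemma position_ball:
  fixes a :: "real^'n"
  assumes m: "0 < m" and b: "0 < \<beta>"
  shows "is_position_of_hbar (\<lambda>z. \<beta> * hbar (m *\<^sub>R z + a))"
proof -
  define u :: "real^'n" where "u = axis undefined 1"
  have u: "u \<bullet> u = 1" by (simp add: u_def)
  show ?thesis using position_rk1[OF u _ _ b, of m 0 a] m by simp
qed



lemma medium:
  fixes f :: "real^'n \<Rightarrow> real" and x0 :: "real^'n"
  assumes lc: "log_concave f" and hb: "\<And>x. hbar x \<le> f x" and f0: "\<And>x. 0 \<le> f x"
    and John: "\<And>g. is_position_of_hbar g \<Longrightarrow> (\<forall>x. g x \<le> f x) \<Longrightarrow>
                 integral UNIV g \<le> integral UNIV (hbar :: real^'n \<Rightarrow> real)"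
    and mu: "0 < \<mu>" "\<mu> \<le> 1/4" "128 * \<mu> * (norm x0)^2 \<le> 1"
    and fx0: "exp (real CARD('n) - \<mu>/1024) \<le> f x0"
  shows False
proof -
  define d where "d = real CARD('n)"
  have d1: "1 \<le> d" by (simp add: d_def)
  define \<tau> where "\<tau> = \<mu>/128"
  define l where "l = \<tau> / (16 * d)"
  define \<eta> where "\<eta> = \<mu>/1024"
  define \<delta> where "\<delta> = l * \<tau> / 2"
  define M where "M = exp (d - \<eta>)"
  define \<beta> where "\<beta> = M powr l * exp \<delta>"
  define m where "m = 1 / (1 - l)"
  define a where "a = (- (m * l)) *\<^sub>R x0"
  define g where "g = (\<lambda>z. \<beta> * hbar (m *\<^sub>R z + a))"
  define R where "R = norm x0"
  have tau: "0 < \<tau>" "\<tau> \<le> 1/512" using mu by (auto simp: \<tau>_def)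
  have lpos: "0 < l" "l \<le> \<tau>" using tau d1 by (auto simp: l_def field_simps)
  have l1: "l \<le> 1/512" using lpos tau by linarith
  have Mpos: "0 < M" by (simp add: M_def)
  have fx0': "M \<le> f x0" using fx0 by (simp add: M_def d_def \<eta>_def)
  have mpos: "0 < m" using l1 by (simp add: m_def)
  have bpos: "0 < \<beta>" using Mpos by (simp add: \<beta>_def)
  have delta: "0 < \<delta>" "\<delta> \<le> \<mu>/8"
  proof -
    show "0 < \<delta>" using lpos tau by (simp add: \<delta>_def)
    have "l * \<tau> \<le> 1 * \<tau>" using l1 tau by (intro mult_right_mono) auto
    then show "\<delta> \<le> \<mu>/8" using tau by (simp add: \<delta>_def \<tau>_def)
  qed
  have Mpl: "M powr l = exp (l * (d - \<eta>))" by (simp add: M_def powr_def)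
  have dom: "g z \<le> f z" for z
  proof -
    define w where "w = m *\<^sub>R z + a"
    have lm: "(1 - l) * m = 1" using l1 by (simp add: m_def)
    have "(1 - l) *\<^sub>R w = ((1 - l) * m) *\<^sub>R z - ((1 - l) * m * l) *\<^sub>R x0"
      by (simp add: w_def a_def algebra_simps)
    then have zw: "z = (1 - l) *\<^sub>R w + l *\<^sub>R x0" using lm by simp
    show ?thesis
    proof (cases "norm w < 1")
      case False
      then have "g z = 0" by (simp add: g_def w_def[symmetric] hbar_zero)
      then show ?thesis using f0 by simp
    next
      case wlt: True
      have w2: "(norm w)^2 < 1" using wlt by (simp add: power_less_one_iff abs_less_iff)
      define h where "h = hbar w"
      have h_eq: "h = sqrt (1 - (norm w)^2)" using wlt by (simp add: h_def hbar_def)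
      have hpos: "0 < h" using w2 by (simp add: h_eq)
      have h1: "h \<le> 1" by (simp add: h_def hbar_le1)
      have gz: "g z = M powr l * exp \<delta> * h" by (simp add: g_def w_def[symmetric] \<beta>_def h_def)
      show ?thesis
      proof (cases "\<tau> \<le> (norm w)^2")
        case True
        have hull: "h powr (1 - l) * M powr l \<le> f z"
          using lc_hull[OF lc hb fx0' Mpos, of l w] lpos l1 zw by (simp add: h_def)
        have lnh: "ln h = ln (1 - (norm w)^2) / 2" using w2 by (simp add: h_eq ln_sqrt)
        have "ln (1 - (norm w)^2) \<le> (1 - (norm w)^2) - 1"
          by (rule ln_le_minus_one) (use w2 in simp)
        then have "ln h \<le> - \<tau> / 2" using True lnh by linarith
        then have "l * (\<tau> / 2) \<le> l * (- ln h)" using lpos by (intro mult_left_mono) auto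
        then have "\<delta> \<le> - l * ln h" by (simp add: \<delta>_def)
        then have "exp \<delta> \<le> exp (- l * ln h)" by simp
        also have "exp (- l * ln h) = h powr (- l)" using hpos by (simp add: powr_def)
        finally have e: "exp \<delta> \<le> h powr (- l)" .
        have "h powr (1 + - l) = h powr 1 * h powr (- l)" by (rule powr_add)
        then have "h powr (1 - l) = h * h powr (- l)" using hpos by simp
        then have "exp \<delta> * h \<le> h powr (1 - l)" using e hpos by (simp add: mult.commute)
        then have "M powr l * (exp \<delta> * h) \<le> M powr l * h powr (1 - l)"
          by (rule mult_left_mono) simp
        then show ?thesis using hull gz by (simp add: mult.commute mult.left_commute)
      next
        case False
        define t where "t = l + \<mu>"
        have t: "0 < t" "t \<le> 1/2" using lpos l1 mu by (auto simp: t_def)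
        define y where "y = (1 / (1 - t)) *\<^sub>R (z - t *\<^sub>R x0)"
        have zy: "z = (1 - t) *\<^sub>R y + t *\<^sub>R x0" using t by (simp add: y_def)
        have hull: "hbar y powr (1 - t) * M powr t \<le> f z"
          using lc_hull[OF lc hb fx0' Mpos, of t y] t zy by simp
        have zt: "z - t *\<^sub>R x0 = (1 - l) *\<^sub>R w - \<mu> *\<^sub>R x0"
          by (simp add: zw t_def algebra_simps)
        have "norm (z - t *\<^sub>R x0) \<le> norm w + \<mu> * R"
        proof -
          have "norm ((1 - l) *\<^sub>R w - \<mu> *\<^sub>R x0) \<le> norm ((1 - l) *\<^sub>R w) + norm (\<mu> *\<^sub>R x0)"
            by (rule norm_triangle_ineq4)
          also have "norm ((1 - l) *\<^sub>R w) \<le> norm w" using l1 lpos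
            by (simp add: mult_left_le_one_le)
          finally show ?thesis using mu by (simp add: zt R_def)
        qed
        moreover have "norm y = norm (z - t *\<^sub>R x0) / (1 - t)" using t by (simp add: y_def)
        ultimately have ny0: "norm y \<le> (norm w + \<mu> * R) / (1 - t)"
          using t by (simp add: divide_right_mono)
        have A0: "0 \<le> norm w + \<mu> * R" using mu by (simp add: R_def)
        have "(norm w + \<mu> * R) * 1 \<le> (norm w + \<mu> * R) * (2 * (1 - t))"
          using A0 t by (intro mult_left_mono) auto
        then have "(norm w + \<mu> * R) / (1 - t) \<le> 2 * (norm w + \<mu> * R)"
          using t by (simp add: divide_le_eq algebra_simps)
        then have ny: "norm y \<le> 2 * (norm w + \<mu> * R)" using ny0 by linarith
        have "(norm y)^2 \<le> (2 * (norm w + \<mu> * R))^2"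
          by (rule power_mono[OF ny]) simp
        also have "\<dots> \<le> 8 * ((norm w)^2 + (\<mu> * R)^2)"
        proof -
          have "(2 * (norm w + \<mu> * R))^2 = 8 * ((norm w)^2 + (\<mu> * R)^2) - 4 * (norm w - \<mu> * R)^2"
            by (simp add: power2_eq_square algebra_simps)
          moreover have "0 \<le> (norm w - \<mu> * R)^2" by simp
          ultimately show ?thesis by linarith
        qed
        also have "\<dots> \<le> 8 * (\<tau> + \<mu>/128)"
        proof -
          have "(\<mu> * R)^2 = \<mu> * (\<mu> * R^2)" by (simp add: power2_eq_square)
          also have "\<dots> \<le> \<mu> * (1/128)" using mu by (intro mult_left_mono) (auto simp: R_def)
          finally show ?thesis using False by simp
        qed
        finally have y2: "(norm y)^2 \<le> \<mu>/8" by (simp add: \<tau>_def)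
        have ny1: "norm y \<le> 1"
        proof (rule ccontr)
          assume "\<not> norm y \<le> 1"
          then have "1 < (norm y)^2" by (simp add: one_less_power)
          then show False using y2 mu by simp
        qed
        have hy: "1 - \<mu>/8 \<le> hbar y" using hbar_ge[OF ny1] y2 by simp
        have hy1: "hbar y \<le> 1" by (rule hbar_le1)
        have hypos: "0 < hbar y" using hy mu by simp
        have "hbar y \<le> hbar y powr (1 - t)"
          using powr_mono'[of "1 - t" 1 "hbar y"] hypos hy1 t by simp
        have Mmu: "1 + \<mu>/2 \<le> M powr \<mu>"
        proof -
          have "\<mu> * (1/2) \<le> \<mu> * (d - \<eta>)" using mu d1 by (intro mult_left_mono) (auto simp: \<eta>_def)
          then have "1 + \<mu>/2 \<le> 1 + \<mu> * (d - \<eta>)" by simp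
          also have "\<dots> \<le> exp (\<mu> * (d - \<eta>))" by (rule exp_ge_add_one_self)
          finally show ?thesis by (simp add: M_def powr_def)
        qed
        have Mt: "M powr t = M powr l * M powr \<mu>" by (simp add: t_def powr_add)
        have "(1 + \<mu>/4) \<le> (1 - \<mu>/8) * (1 + \<mu>/2)"
        proof -
          have mm: "\<mu> * \<mu> \<le> \<mu> * 1" using mu by (intro mult_left_mono) auto
          have "(1 - \<mu>/8) * (1 + \<mu>/2) = 1 + 3*\<mu>/8 - \<mu>*\<mu>/16" by (simp add: field_simps)
          then show ?thesis using mm mu by linarith
        qed
        also have "\<dots> \<le> hbar y * M powr \<mu>"
          by (rule mult_mono[OF hy Mmu]) (use hypos mu in auto)
        also have "\<dots> \<le> hbar y powr (1 - t) * M powr \<mu>"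
          by (rule mult_right_mono[OF \<open>hbar y \<le> hbar y powr (1 - t)\<close>]) simp
        finally have A: "1 + \<mu>/4 \<le> hbar y powr (1 - t) * M powr \<mu>" .
        have "exp \<delta> \<le> 1 + 2 * \<delta>"
          using exp_bound_lemma[of \<delta>] delta mu by simp
        also have "\<dots> \<le> 1 + \<mu>/4" using delta by simp
        finally have B: "exp \<delta> \<le> 1 + \<mu>/4" .
        have "g z \<le> M powr l * exp \<delta>"
          using gz h1 hpos Mpos by (simp add: mult_left_le)
        also have "\<dots> \<le> M powr l * (hbar y powr (1 - t) * M powr \<mu>)"
          using A B by (intro mult_left_mono) auto
        also have "\<dots> = hbar y powr (1 - t) * M powr t" by (simp add: Mt)
        finally show ?thesis using hull by linarith
      qed
    qed
  qed
  define I where "I = integral UNIV (hbar :: real^'n \<Rightarrow> real)"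
  have Ipos: "0 < I" using hbar_int_pos by (simp add: I_def)
  have "(g has_integral \<beta> * (I / m ^ CARD('n))) UNIV"
    unfolding g_def I_def by (rule has_integral_mult_right[OF hbar_affine_integral[OF mpos]])
  then have gint: "integral UNIV g = \<beta> * (1 - l) ^ CARD('n) * I"
    by (simp add: integral_unique m_def power_divide)
  have ratio: "1 < \<beta> * (1 - l) ^ CARD('n)"
  proof -
    have lnl: "- l - 2 * l^2 \<le> ln (1 - l)" by (rule ln_one_minus_pos_lower_bound) (use lpos l1 in auto)
    have "(1 - l) ^ CARD('n) = exp (d * ln (1 - l))"
      using l1 by (simp add: d_def exp_of_nat_mult)
    then have "\<beta> * (1 - l) ^ CARD('n) = exp (l * (d - \<eta>) + \<delta> + d * ln (1 - l))"
      by (simp add: \<beta>_def Mpl exp_add)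
    moreover have "0 < l * (d - \<eta>) + \<delta> + d * ln (1 - l)"
    proof -
      have "d * (- l - 2 * l^2) \<le> d * ln (1 - l)" using lnl d1 by (intro mult_left_mono) auto
      moreover have "0 < l * (d - \<eta>) + \<delta> + d * (- l - 2 * l^2)"
      proof -
        have "l * (d - \<eta>) + \<delta> + d * (- l - 2 * l^2) = l * (\<delta> / l - \<eta> - 2 * d * l)"
          using lpos by (simp add: algebra_simps power2_eq_square)
        also have "\<delta> / l - \<eta> - 2 * d * l = \<tau> / 4"
          using lpos d1 by (simp add: \<delta>_def \<eta>_def l_def \<tau>_def field_simps)
        finally have E: "l * (d - \<eta>) + \<delta> + d * (- l - 2 * l^2) = l * (\<tau> / 4)" .
        have "0 < l * (\<tau> / 4)" using lpos tau by simp
        then show ?thesis using E by linarith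
      qed
      ultimately show ?thesis by linarith
    qed
    ultimately show ?thesis by simp
  qed
  have "integral UNIV g \<le> I"
    unfolding I_def by (rule John[OF _ ]) (use dom position_ball[OF mpos bpos] in \<open>auto simp: g_def\<close>)
  moreover have "I < integral UNIV g"
    using ratio Ipos gint by (simp add: mult_less_cancel_right1 mult.assoc)
  ultimately show False by simp
qed



lemma proj_decomp:
  fixes u v :: "real^'n"
  assumes u: "u \<bullet> u = 1"
  shows "u \<bullet> (v - (u \<bullet> v) *\<^sub>R u) = 0"
    and "(norm (v - (u \<bullet> v) *\<^sub>R u))^2 = (norm v)^2 - (u \<bullet> v)^2"
proof -
  show o: "u \<bullet> (v - (u \<bullet> v) *\<^sub>R u) = 0" using u by (simp add: inner_diff_right)
  have "(norm (v - (u \<bullet> v) *\<^sub>R u))^2 = (v - (u \<bullet> v) *\<^sub>R u) \<bullet> (v - (u \<bullet> v) *\<^sub>R u)"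
    by (simp add: power2_norm_eq_inner)
  also have "\<dots> = v \<bullet> v - 2 * (u \<bullet> v)^2 + (u \<bullet> v)^2 * (u \<bullet> u)"
    by (simp add: inner_diff_left inner_diff_right inner_commute power2_eq_square algebra_simps)
  finally show "(norm (v - (u \<bullet> v) *\<^sub>R u))^2 = (norm v)^2 - (u \<bullet> v)^2"
    using u by (simp add: power2_norm_eq_inner)
qed

lemma orth_norm2:
  fixes u p :: "real^'n"
  assumes u: "u \<bullet> u = 1" and o: "u \<bullet> p = 0"
  shows "(norm (a *\<^sub>R p + b *\<^sub>R u))^2 = a^2 * (norm p)^2 + b^2"
proof -
  have "(norm (a *\<^sub>R p + b *\<^sub>R u))^2 = (a *\<^sub>R p + b *\<^sub>R u) \<bullet> (a *\<^sub>R p + b *\<^sub>R u)"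
    by (simp add: power2_norm_eq_inner)
  also have "\<dots> = a^2 * (p \<bullet> p) + 2 * a * b * (u \<bullet> p) + b^2 * (u \<bullet> u)"
    by (simp add: inner_add_left inner_add_right inner_commute power2_eq_square algebra_simps)
  finally show ?thesis using u o by (simp add: power2_norm_eq_inner)
qed

lemma W_formula:
  fixes u z :: "real^'n"
  assumes u: "u \<bullet> u = 1" and R: "0 < R"
  defines "t \<equiv> u \<bullet> (z - (R/4) *\<^sub>R u)"
  defines "p \<equiv> (z - (R/4) *\<^sub>R u) - t *\<^sub>R u"
  shows "4 *\<^sub>R z + ((4/R - 4) * (u \<bullet> z)) *\<^sub>R u + - u = 4 *\<^sub>R p + (4 * t / R) *\<^sub>R u"
proof -
  have uz: "u \<bullet> z = R/4 + t" using u by (simp add: t_def inner_diff_right)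
  have z: "z = p + (R/4 + t) *\<^sub>R u" by (simp add: p_def algebra_simps)
  have "4 *\<^sub>R z + ((4/R - 4) * (u \<bullet> z)) *\<^sub>R u + - u
      = 4 *\<^sub>R p + (4 * (R/4 + t) + (4/R - 4) * (R/4 + t) - 1) *\<^sub>R u"
    by (simp add: uz) (subst z, simp add: algebra_simps)
  also have "4 * (R/4 + t) + (4/R - 4) * (R/4 + t) - 1 = 4 * t / R"
    using R by (simp add: field_simps)
  finally show ?thesis .
qed



lemma large_dom:
  fixes f :: "real^'n \<Rightarrow> real" and x0 :: "real^'n"
  assumes lc: "log_concave f" and hb: "\<And>x. hbar x \<le> f x" and f0: "\<And>x. 0 \<le> f x"
    and M: "1 \<le> M" and fx0: "M \<le> f x0" and R: "0 < norm x0"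
  defines "u \<equiv> (1 / norm x0) *\<^sub>R x0"
  shows "(1/2) * hbar (4 *\<^sub>R z + ((4 / norm x0 - 4) * (u \<bullet> z)) *\<^sub>R u + - u) \<le> f z"
proof -
  define R where "R = norm x0"
  have Rp: "0 < R" using R by (simp add: R_def)
  have u: "u \<bullet> u = 1" using R by (simp add: u_def power2_norm_eq_inner[symmetric] power2_eq_square)
  have x0: "x0 = R *\<^sub>R u" using R by (simp add: u_def R_def)
  define t where "t = u \<bullet> (z - (R/4) *\<^sub>R u)"
  define p where "p = (z - (R/4) *\<^sub>R u) - t *\<^sub>R u"
  define W where "W = 4 *\<^sub>R z + ((4 / norm x0 - 4) * (u \<bullet> z)) *\<^sub>R u + - u"
  have WF: "W = 4 *\<^sub>R p + (4 * t / R) *\<^sub>R u"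
    using W_formula[OF u Rp, of z] by (simp add: W_def t_def p_def R_def)
  have up: "u \<bullet> p = 0" using proj_decomp(1)[OF u, of "z - (R/4) *\<^sub>R u"] by (simp add: p_def t_def)
  have W2: "(norm W)^2 = 16 * (norm p)^2 + (4 * t / R)^2"
    using orth_norm2[OF u up, of 4 "4 * t / R"] by (simp add: WF)
  show ?thesis
  proof (cases "norm W < 1")
    case False
    then have "hbar W = 0" by (intro hbar_zero) simp
    then show ?thesis using f0[of z] by (simp add: W_def)
  next
    case True
    then have W1: "(norm W)^2 < 1" by (simp add: power_less_one_iff)
    have n1: "0 \<le> (norm p)^2" "0 \<le> (4 * t / R)^2" by simp_all
    have p2: "16 * (norm p)^2 < 1" using W1 W2 n1 by linarith
    have t2: "(4 * t / R)^2 < 1" using W1 W2 n1 by linarith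
    have "\<bar>4 * t / R\<bar> < 1" using t2 by (simp add: power_less_one_iff abs_square_less_1)
    then have tR: "\<bar>t\<bar> < R/4" using Rp by (simp add: abs_div field_simps)
    define lam where "lam = (R/4 + t) / R"
    have lam: "0 < lam" "lam < 1/2" using tR Rp by (auto simp: lam_def field_simps abs_less_iff)
    define y where "y = (1 / (1 - lam)) *\<^sub>R p"
    have z: "z = p + (R/4 + t) *\<^sub>R u" by (simp add: p_def algebra_simps)
    have lx: "lam *\<^sub>R x0 = (R/4 + t) *\<^sub>R u" using Rp by (simp add: x0 lam_def)
    have zy: "z = (1 - lam) *\<^sub>R y + lam *\<^sub>R x0" using lam by (simp add: y_def lx z)
    have hull: "hbar y powr (1 - lam) * M powr lam \<le> f z"
      using lc_hull[OF lc hb fx0, of lam y] M lam zy by simp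
    have np: "norm p < 1/4"
    proof (rule ccontr)
      assume "\<not> norm p < 1/4"
      then have "(1/4)*(1/4) \<le> norm p * norm p" by (intro mult_mono) auto
      then show False using p2 by (simp add: power2_eq_square)
    qed
    have "norm y = norm p / (1 - lam)" using lam by (simp add: y_def)
    also have "\<dots> \<le> 2 * norm p"
    proof -
      have "norm p * 1 \<le> norm p * (2 * (1 - lam))" using lam by (intro mult_left_mono) auto
      then show ?thesis using lam by (simp add: divide_le_eq algebra_simps)
    qed
    finally have ny: "norm y \<le> 1/2" using np by linarith
    have "norm y * norm y \<le> (1/2) * (1/2)" using ny by (intro mult_mono) auto
    then have "(norm y)^2 \<le> 1/4" by (simp add: power2_eq_square)
    then have hy: "3/4 \<le> hbar y" using hbar_ge[of y] ny by linarith
    have "hbar y \<le> hbar y powr (1 - lam)"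
      using powr_mono'[of "1 - lam" 1 "hbar y"] hbar_nonneg[of y] hbar_le1[of y] lam hy by simp
    moreover have "1 \<le> M powr lam" using M lam by (intro ge_one_powr_ge_zero) auto
    ultimately have "hbar y \<le> hbar y powr (1 - lam) * M powr lam"
      using hy by (metis mult_left_mono mult.right_neutral order_trans less_imp_le powr_ge_zero)
    then have "3/4 \<le> f z" using hull hy by linarith
    moreover have "(1/2) * hbar W \<le> 1/2" using hbar_le1[of W] by simp
    ultimately show ?thesis by (simp add: W_def)
  qed
qed



lemma W_small:
  fixes u p :: "real^'n"
  assumes u: "u \<bullet> u = 1" and up: "u \<bullet> p = 0" and Rp: "0 < R"
    and W: "norm (4 *\<^sub>R p + (4 * t / R) *\<^sub>R u) < 1"
  shows "norm p < 1/4" "\<bar>t\<bar> < R/4"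
proof -
  have W2: "(norm (4 *\<^sub>R p + (4 * t / R) *\<^sub>R u))^2 = 16 * (norm p)^2 + (4 * t / R)^2"
    using orth_norm2[OF u up, of 4 "4 * t / R"] by simp
  have W1: "(norm (4 *\<^sub>R p + (4 * t / R) *\<^sub>R u))^2 < 1" using W by (simp add: power_less_one_iff)
  have n1: "0 \<le> (norm p)^2" "0 \<le> (4 * t / R)^2" by simp_all
  have p2: "16 * (norm p)^2 < 1" using W1 W2 n1 by linarith
  have t2: "(4 * t / R)^2 < 1" using W1 W2 n1 by linarith
  have "\<bar>4 * t / R\<bar> < 1" using t2 by (simp add: power_less_one_iff abs_square_less_1)
  then show "\<bar>t\<bar> < R/4" using Rp by (simp add: abs_div field_simps)
  show "norm p < 1/4"
  proof (rule ccontr)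
    assume "\<not> norm p < 1/4"
    then have "(1/4)*(1/4) \<le> norm p * norm p" by (intro mult_mono) auto
    then show False using p2 by (simp add: power2_eq_square)
  qed
qed

lemma cube_bound:
  fixes u z :: "real^'n"
  assumes u: "u \<bullet> u = 1" and Rp: "0 < R"
    and kR: "real k / 2 + 1/8 \<le> R / 8"
    and z: "z \<in> cbox ((R/4) *\<^sub>R u + (real k / 2) *\<^sub>R u - vec (1 / (8 * CARD('n))))
                     ((R/4) *\<^sub>R u + (real k / 2) *\<^sub>R u + vec (1 / (8 * CARD('n))))"
  shows "1/4 \<le> (1/2) * hbar (4 *\<^sub>R z + ((4/R - 4) * (u \<bullet> z)) *\<^sub>R u + - u)"
proof -
  define h :: real where "h = 1 / (8 * CARD('n))"
  define e where "e = z - ((R/4) *\<^sub>R u + (real k / 2) *\<^sub>R u)"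
  have ei: "\<bar>e $ i\<bar> \<le> h" for i
    using z unfolding mem_box_cart e_def h_def by (simp add: abs_le_iff) (metis add.commute diff_le_eq le_diff_eq minus_diff_eq)
  have "(\<Sum>i\<in>UNIV. \<bar>e $ i\<bar>) \<le> (\<Sum>i\<in>(UNIV::'n set). h)" by (intro sum_mono ei)
  also have "\<dots> = 1/8" by (simp add: h_def)
  finally have ne: "norm e \<le> 1/8" using norm_le_l1_cart[of e] by linarith
  define t where "t = u \<bullet> (z - (R/4) *\<^sub>R u)"
  define p where "p = (z - (R/4) *\<^sub>R u) - t *\<^sub>R u"
  have WF: "4 *\<^sub>R z + ((4/R - 4) * (u \<bullet> z)) *\<^sub>R u + - u = 4 *\<^sub>R p + (4 * t / R) *\<^sub>R u"
    using W_formula[OF u Rp, of z] by (simp add: t_def p_def)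
  have ve: "z - (R/4) *\<^sub>R u = (real k / 2) *\<^sub>R u + e" by (simp add: e_def)
  have t: "t = real k / 2 + u \<bullet> e" using u by (simp add: t_def ve inner_add_right)
  have p: "p = e - (u \<bullet> e) *\<^sub>R u" by (simp add: p_def ve t algebra_simps)
  have up: "u \<bullet> p = 0" using proj_decomp(1)[OF u, of e] by (simp add: p)
  have "(norm p)^2 = (norm e)^2 - (u \<bullet> e)^2" using proj_decomp(2)[OF u, of e] by (simp add: p)
  then have pe: "(norm p)^2 \<le> norm e * norm e" by (simp add: power2_eq_square)
  have "norm e * norm e \<le> (1/8) * (1/8)" using ne by (intro mult_mono) auto
  then have p2: "(norm p)^2 \<le> 1/64" using pe by linarith
  have nu: "norm u = 1" using u by (metis norm_eq_sqrt_inner real_sqrt_one)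
  have "\<bar>u \<bullet> e\<bar> \<le> norm u * norm e" by (rule Cauchy_Schwarz_ineq2)
  then have ue: "\<bar>u \<bullet> e\<bar> \<le> 1/8" using ne nu by simp
  have "\<bar>t\<bar> \<le> R/8"
  proof -
    have "\<bar>t\<bar> \<le> \<bar>real k / 2\<bar> + \<bar>u \<bullet> e\<bar>" unfolding t by (rule abs_triangle_ineq)
    then show ?thesis using ue kR by simp
  qed
  then have "\<bar>4 * t / R\<bar> \<le> 1/2" using Rp by (simp add: abs_div field_simps)
  then have "\<bar>4 * t / R\<bar> * \<bar>4 * t / R\<bar> \<le> (1/2) * (1/2)" by (intro mult_mono) auto
  then have t2: "(4 * t / R)^2 \<le> 1/4" by (simp add: power2_eq_square)
  have W2: "(norm (4 *\<^sub>R p + (4 * t / R) *\<^sub>R u))^2 = 16 * (norm p)^2 + (4 * t / R)^2"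
    using orth_norm2[OF u up, of 4 "4 * t / R"] by simp
  define W where "W = 4 *\<^sub>R p + (4 * t / R) *\<^sub>R u"
  have Wl: "(norm W)^2 \<le> 1/2" using W2 p2 t2 by (simp add: W_def)
  have nW: "norm W \<le> 1"
  proof (rule ccontr)
    assume "\<not> norm W \<le> 1"
    then have "1 < (norm W)^2" by (simp add: one_less_power)
    then show False using Wl by simp
  qed
  have "1/2 \<le> hbar W" using hbar_ge[OF nW] Wl by simp
  then show ?thesis using WF by (simp add: W_def)
qed



lemma large:
  fixes f :: "real^'n \<Rightarrow> real" and x0 :: "real^'n"
  assumes lc: "log_concave f" and hb: "\<And>x. hbar x \<le> f x" and f0: "\<And>x. 0 \<le> f x"
    and John: "\<And>g. is_position_of_hbar g \<Longrightarrow> (\<forall>x. g x \<le> f x) \<Longrightarrow>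
                 integral UNIV g \<le> integral UNIV (hbar :: real^'n \<Rightarrow> real)"
    and M: "1 \<le> M" and fx0: "M \<le> f x0"
    and big: "4 * real (4 * (8 * CARD('n))^CARD('n) + 1) < norm x0"
  shows False
proof -
  define n where "n = CARD('n)"
  have n1: "1 \<le> n" by (simp add: n_def)
  define K where "K = 4 * (8 * n)^n + 1"
  define R where "R = norm x0"
  have RK: "4 * real K < R" using big by (simp add: K_def n_def R_def)
  have K1: "1 \<le> K" by (simp add: K_def)
  then have "1 \<le> real K" by simp
  then have R1: "1 \<le> R" using RK by linarith
  then have Rp: "0 < R" by linarith
  define u where "u = (1 / R) *\<^sub>R x0"
  have u: "u \<bullet> u = 1" using Rp by (simp add: u_def R_def power2_norm_eq_inner[symmetric] power2_eq_square)
  have nu: "norm u = 1" using u by (metis norm_eq_sqrt_inner real_sqrt_one)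
  define c where "c = (R/4) *\<^sub>R u"
  define g where "g = (\<lambda>z. (1/2) * hbar (4 *\<^sub>R z + ((4/R - 4) * (u \<bullet> z)) *\<^sub>R u + - u))"
  have pos: "is_position_of_hbar g"
    using position_rk1[OF u, of 4 "4/R - 4" "1/2" "-u"] Rp by (simp add: g_def)
  have dom: "\<forall>z. g z \<le> f z"
    using large_dom[OF lc hb f0 M fx0] Rp by (simp add: g_def u_def R_def)
  have gnn: "0 \<le> g z" for z by (simp add: g_def hbar_nonneg)
  have cont: "continuous_on UNIV g"
  proof -
    have "continuous_on UNIV (\<lambda>z. 4 *\<^sub>R z + ((4/R - 4) * (u \<bullet> z)) *\<^sub>R u + - u)"
      by (intro continuous_intros)
    then have "continuous_on UNIV (\<lambda>z. hbar (4 *\<^sub>R z + ((4/R - 4) * (u \<bullet> z)) *\<^sub>R u + - u))"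
      by (rule continuous_on_compose2[OF continuous_hbar]) simp
    then show ?thesis unfolding g_def by (intro continuous_on_mult continuous_on_const)
  qed
  have supp: "g z = 0" if z: "z \<notin> cbox (c - vec R) (c + vec R)" for z
  proof (rule ccontr)
    assume gz: "g z \<noteq> 0"
    define t where "t = u \<bullet> (z - (R/4) *\<^sub>R u)"
    define p where "p = (z - (R/4) *\<^sub>R u) - t *\<^sub>R u"
    have WF: "4 *\<^sub>R z + ((4/R - 4) * (u \<bullet> z)) *\<^sub>R u + - u = 4 *\<^sub>R p + (4 * t / R) *\<^sub>R u"
      using W_formula[OF u Rp, of z] by (simp add: t_def p_def)
    have up: "u \<bullet> p = 0" using proj_decomp(1)[OF u, of "z - (R/4) *\<^sub>R u"] by (simp add: p_def t_def)
    have "norm (4 *\<^sub>R p + (4 * t / R) *\<^sub>R u) < 1"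
    proof (rule ccontr)
      assume "\<not> norm (4 *\<^sub>R p + (4 * t / R) *\<^sub>R u) < 1"
      then have "hbar (4 *\<^sub>R p + (4 * t / R) *\<^sub>R u) = 0" by (intro hbar_zero) simp
      then show False using gz WF by (simp add: g_def)
    qed
    note ws = W_small[OF u up Rp this]
    have zc: "z - c = p + t *\<^sub>R u" by (simp add: p_def c_def)
    have "norm (z - c) \<le> norm p + norm (t *\<^sub>R u)" unfolding zc by (rule norm_triangle_ineq)
    also have "norm (t *\<^sub>R u) = \<bar>t\<bar>" using nu by simp
    finally have "norm (z - c) < R" using ws R1 by linarith
    then have "\<bar>(z - c) $ i\<bar> < R" for i using component_le_norm_cart[of "z - c" i] by linarith
    then have "z \<in> cbox (c - vec R) (c + vec R)"
      unfolding mem_box_cart by (simp add: abs_less_iff) (metis diff_le_eq le_diff_eq less_imp_le add.commute)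
    with z show False by blast
  qed
  have gint: "g integrable_on UNIV" by (rule supp_integrable[OF cont supp])
  define h :: real where "h = 1 / (8 * CARD('n))"
  have hpos: "0 < h" by (simp add: h_def)
  define Q where "Q = (\<lambda>k::nat. cbox ((R/4) *\<^sub>R u + (real k / 2) *\<^sub>R u - vec h)
                                   ((R/4) *\<^sub>R u + (real k / 2) *\<^sub>R u + vec h))"
  obtain i0 where i0: "1 / real n \<le> \<bar>u $ i0\<bar>"
  proof (rule ccontr)
    assume "\<not> thesis"
    have lt: "\<bar>u $ i\<bar> < 1 / real n" for i
    proof (rule ccontr)
      assume "\<not> \<bar>u $ i\<bar> < 1 / real n"
      then have "1 / real n \<le> \<bar>u $ i\<bar>" by simp
      then show False using that \<open>\<not> thesis\<close> by blast
    qed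
    have "(\<Sum>i\<in>UNIV. \<bar>u $ i\<bar>) < (\<Sum>i\<in>(UNIV::'n set). 1 / real n)"
      by (rule sum_strict_mono) (use lt in auto)
    also have "\<dots> = 1" using n1 by (simp add: n_def)
    finally show False using norm_le_l1_cart[of u] nu by linarith
  qed
  have disj: False if jk: "j \<noteq> k" and zj: "z \<in> Q j" and zk: "z \<in> Q k" for j k z
  proof -
    have aj: "\<bar>z $ i0 - ((R/4) * u $ i0 + real j / 2 * u $ i0)\<bar> \<le> h"
      using zj unfolding Q_def mem_box_cart by (simp add: abs_le_iff) (metis add.commute diff_le_eq le_diff_eq minus_diff_eq)
    have ak: "\<bar>z $ i0 - ((R/4) * u $ i0 + real k / 2 * u $ i0)\<bar> \<le> h"
      using zk unfolding Q_def mem_box_cart by (simp add: abs_le_iff) (metis add.commute diff_le_eq le_diff_eq minus_diff_eq)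
    have "\<bar>(real j - real k) / 2 * u $ i0\<bar> \<le> 2 * h"
    proof -
      have "(real j - real k) / 2 * u $ i0 = (z $ i0 - ((R/4) * u $ i0 + real k / 2 * u $ i0))
              - (z $ i0 - ((R/4) * u $ i0 + real j / 2 * u $ i0))" by (simp add: field_simps)
      then show ?thesis using aj ak by linarith
    qed
    moreover have "1 \<le> \<bar>real j - real k\<bar>" using jk by linarith
    then have "1 / 2 * (1 / real n) \<le> \<bar>real j - real k\<bar> / 2 * \<bar>u $ i0\<bar>"
      using i0 by (intro mult_mono) auto
    moreover have "2 * h < 1 / 2 * (1 / real n)" using n1 by (simp add: h_def n_def field_simps)
    ultimately show False by (simp add: abs_mult)
  qed
  have lowb: "(\<Sum>k<K. (if z \<in> Q k then (1/4::real) else 0)) \<le> g z" for z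
  proof (cases "\<exists>k<K. z \<in> Q k")
    case True
    then obtain k0 where k0: "k0 < K" "z \<in> Q k0" by blast
    have "(\<Sum>k<K. (if z \<in> Q k then (1/4::real) else 0)) = (\<Sum>k<K. (if k = k0 then 1/4 else 0))"
      by (rule sum.cong) (use disj k0 in auto)
    also have "\<dots> = 1/4" using k0 by simp
    also have "1/4 \<le> g z"
    proof -
      have "real k0 + 1 \<le> real K" using k0 by simp
      then have "real k0 / 2 + 1/8 \<le> R / 8" using RK by simp
      then show ?thesis using cube_bound[OF u Rp, of k0 z] k0 by (simp add: g_def Q_def h_def)
    qed
    finally show ?thesis .
  next
    case False
    then have "(\<Sum>k<K. (if z \<in> Q k then (1/4::real) else 0)) = 0" by (intro sum.neutral) auto
    then show ?thesis using gnn[of z] by simp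
  qed
  have cQ: "Henstock_Kurzweil_Integration.content (Q k) = (2 * h) ^ n" for k
  proof -
    have "(R/4) *\<^sub>R u + (real k / 2) *\<^sub>R u \<in> Q k" using hpos by (simp add: Q_def mem_box_cart)
    then have "Q k \<noteq> {}" by blast
    then show ?thesis unfolding Q_def by (subst content_cbox_cart) (simp_all add: Q_def n_def)
  qed
  have intQ: "((\<lambda>z. \<Sum>k<K. (if z \<in> Q k then (1/4::real) else 0)) has_integral (\<Sum>k<K. 1/4 * (2 * h) ^ n)) UNIV"
  proof (rule has_integral_sum)
    fix k assume "k \<in> {..<K}"
    have "((\<lambda>z. if z \<in> Q k then (1/4::real) else 0) has_integral 1/4 * Henstock_Kurzweil_Integration.content (Q k)) UNIV"
      unfolding Q_def by (rule indicator_box_integral)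
    then show "((\<lambda>z. if z \<in> Q k then (1/4::real) else 0) has_integral 1/4 * (2 * h) ^ n) UNIV"
      by (simp only: cQ)
  qed simp
  have "(\<Sum>k<K. 1/4 * (2 * h) ^ n) \<le> integral UNIV g"
    by (rule has_integral_le[OF intQ integrable_integral[OF gint]]) (use lowb in auto)
  moreover have "integral UNIV g \<le> 2 ^ n"
    using John[OF pos dom] hbar_int_le[where 'n='n] by (simp add: n_def)
  moreover have "2 ^ n < (\<Sum>k<K. 1/4 * (2 * h) ^ n)"
  proof -
    have hh: "2 * h = 1 / (4 * real n)" by (simp add: h_def n_def)
    have "(\<Sum>k<K. 1/4 * (2 * h) ^ n) = real K / 4 * (1 / (4 * real n)) ^ n" by (simp add: hh)
    moreover have "real K = 4 * (8 * real n) ^ n + 1" by (simp add: K_def)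
    moreover have "(8 * real n) ^ n * (1 / (4 * real n)) ^ n = 2 ^ n"
    proof -
      have "(8 * real n) * (1 / (4 * real n)) = 2" using n1 by simp
      then show ?thesis by (metis power_mult_distrib)
    qed
    moreover have "0 < (1 / (4 * real n)) ^ n" using n1 by simp
    ultimately show ?thesis by (simp add: algebra_simps)
  qed
  ultimately show False by linarith
qed



theorem lemma5p2:
  "\<exists>\<epsilon>>0. \<forall>f :: real^'n \<Rightarrow> real.
     proper_log_concave f \<and> hbar_is_John_function f \<longrightarrow>
     (\<forall>x. f x \<le> exp (real CARD('n)) - \<epsilon>)"
proof -
  define n where "n = CARD('n)"
  have n1: "1 \<le> n" by (simp add: n_def)
  define R0 where "R0 = 4 * real (4 * (8 * CARD('n))^CARD('n) + 1)"
  have R0: "0 \<le> R0" by (simp add: R0_def)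
  define \<mu> where "\<mu> = 1 / (128 * (R0^2 + 1))"
  have den: "128 \<le> 128 * (R0^2 + 1)" by simp
  have mu: "0 < \<mu>" "\<mu> \<le> 1/4"
  proof -
    have "0 < 128 * (R0^2 + 1)" using den by linarith
    then show "0 < \<mu>" unfolding \<mu>_def by (rule divide_pos_pos[rotated]) simp
    have "\<mu> \<le> 1 / 128" unfolding \<mu>_def by (rule frac_le) (use den in auto)
    then show "\<mu> \<le> 1/4" by simp
  qed
  define \<epsilon> where "\<epsilon> = exp (real n) - exp (real n - \<mu>/1024)"
  have epos: "0 < \<epsilon>" using mu by (simp add: \<epsilon>_def)
  show ?thesis
  proof (intro exI[of _ \<epsilon>] conjI allI impI epos)
    fix f :: "real^'n \<Rightarrow> real" and x :: "real^'n"
    assume "proper_log_concave f \<and> hbar_is_John_function f"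
    then have f0: "\<And>x. 0 \<le> f x" and lc: "log_concave f" and hb: "\<And>x. hbar x \<le> f x"
      and John: "\<And>g. is_position_of_hbar g \<Longrightarrow> (\<forall>x. g x \<le> f x) \<Longrightarrow>
                 integral UNIV g \<le> integral UNIV (hbar :: real^'n \<Rightarrow> real)"
      unfolding proper_log_concave_def hbar_is_John_function_def by blast+
    show "f x \<le> exp (real CARD('n)) - \<epsilon>"
    proof (rule ccontr)
      assume "\<not> f x \<le> exp (real CARD('n)) - \<epsilon>"
      then have fx: "exp (real CARD('n) - \<mu>/1024) \<le> f x" by (simp add: \<epsilon>_def n_def)
      show False
      proof (cases "norm x \<le> R0")
        case True
        have "(norm x)^2 \<le> R0^2" using True by (intro power_mono) auto
        moreover have p1: "0 < R0^2 + 1" by (simp add: add_nonneg_pos)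
        moreover have "128 * \<mu> * (norm x)^2 = (norm x)^2 / (R0^2 + 1)"
          using p1 by (simp add: \<mu>_def divide_simps)
        ultimately have "128 * \<mu> * (norm x)^2 \<le> 1" by (simp add: divide_le_eq)
        then show False using medium[OF lc hb f0 John mu(1) mu(2) _ fx] by blast
      next
        case False
        have "1 \<le> real CARD('n)" by simp
        then have "\<mu>/1024 \<le> real CARD('n)" using mu by linarith
        then have M: "1 \<le> exp (real CARD('n) - \<mu>/1024)" by simp
        show False using large[OF lc hb f0 John M fx] False by (simp add: R0_def)
      qed
    qed
  qed
qed


end
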